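(* Let $A \subset \mathbb{Z}^d$ be a finite set whose convex hull is a $d$-dimensional simplex with vertices $v_1, \ldots, v_{d+1}$, where $v_{d+1} = 0$. For $v \in \mathbb{Z}^d$ write $\widetilde{v} = (v,1)$. Let $\mathcal{C}_A = \{\sum_{a \in A} n_a \widetilde{a} : n_a \in \mathbb{N}\}$ and $\Lambda = \mathrm{span}_{\mathbb{Z}}\{\widetilde{v}_1, \ldots, \widetilde{v}_{d+1}\}$. For each $i$, let $\mathcal{C}_i = \{\sum_{a \in A} n_a (a - v_i, 1) : n_a \in \mathbb{N}\}$ and $\Lambda_i = \mathrm{span}_{\mathbb{Z}}\{(v_j - v_i, 1) : 1 \leq j \leq d+1\}$. Fix $\pi \in \mathbb{Z}^{d+1}$, let $\mathcal{S}_\pi$ be the set of points of $\mathcal{C}_A$ congruent to $\pi$ modulo $\Lambda$, and for each $i$ and $\rho \in \mathbb{Z}^{d+1}$ let $\mathcal{S}_{\rho,i}$ be the set of points of $\mathcal{C}_i$ congruent to $\rho$ modulo $\Lambda_i$. A point $(g,H) \in \mathcal{S}_\pi$ is a minimal element of $\mathcal{S}_\pi$ if $(g,H) - \widetilde{v}_j \notin \mathcal{C}_A$ for all $j$; a point $(g,H) \in \mathcal{S}_{\rho,i}$ is a minimal element of $\mathcal{S}_{\rho,i}$ if $(g,H) - (v_j - v_i, 1) \notin \mathcal{C}_i$ for all $j$. Suppose the minimal elements of $\mathcal{S}_\pi$ are $(g_1,H_1), \ldots, (g_n,H_n)$. Then for any $1 \leq i \leq d$, the set $\mathcal{S}_{\pi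 - \widetilde{v}_i, i}$ has exactly $n$ minimal elements, and they can be enumerated as $(g^1, H^1), \ldots, (g^n, H^n)$ with \[ g^j = g_j - H_j v_i \quad \text{and} \quad H^j = H_j \qquad \text{for all } j \leq n. \]
   Context: $\mathbb{N} = \{0,1,2,\ldots\}$; points of $\mathbb{Z}^{d+1}$ are written $(g,H)$ with $g \in \mathbb{Z}^d$, $H \in \mathbb{Z}$. *)

theory Defs
  imports "HOL-Analysis.Analysis"
begin

text \<open>Points of Z^(d+1) are pairs (g,H) :: int^'d \<times> int; the dimension d is CARD('d).\<close>

definition rvec :: "int ^ 'n \<Rightarrow> real ^ 'n" where
  "rvec x = (\<chi> k. real_of_int (x $ k))"

text \<open>The semigroup generated by the lifted points (a - w, 1), a \<in> A (w = 0 gives C_A,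
  w = v_i gives C_i).\<close>
definition cone_at :: "(int ^ 'n) set \<Rightarrow> int ^ 'n \<Rightarrow> ((int ^ 'n) \<times> int) set" where
  "cone_at A w = {((\<Sum>a\<in>A. int (c a) *s (a - w)), (\<Sum>a\<in>A. int (c a))) | c :: int ^ 'n \<Rightarrow> nat. True}"

definition lat :: "(nat \<Rightarrow> int ^ 'n) \<Rightarrow> nat set \<Rightarrow> int ^ 'n \<Rightarrow> ((int ^ 'n) \<times> int) set" where
  "lat v I w = {((\<Sum>j\<in>I. c j *s (v j - w)), (\<Sum>j\<in>I. c j)) | c :: nat \<Rightarrow> int. True}"

definition cong_set :: "((int ^ 'n) \<times> int) set \<Rightarrow> ((int ^ 'n) \<times> int) set \<Rightarrow> (int ^ 'n) \<times> int
    \<Rightarrow> ((int ^ 'n) \<times> int) set" where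
  "cong_set C L \<rho> = {p \<in> C. p - \<rho> \<in> L}"

definition minimal_elems :: "((int ^ 'n) \<times> int) set \<Rightarrow> ((int ^ 'n) \<times> int) set
    \<Rightarrow> (nat \<Rightarrow> int ^ 'n) \<Rightarrow> nat set \<Rightarrow> int ^ 'n \<Rightarrow> ((int ^ 'n) \<times> int) set" where
  "minimal_elems S C v I w = {p \<in> S. \<forall>j\<in>I. p - (v j - w, 1) \<notin> C}"

end

theory Submission
  imports Defs
begin

definition sh :: "int ^ 'n \<Rightarrow> (int ^ 'n) \<times> int \<Rightarrow> (int ^ 'n) \<times> int" where
  "sh w p = (fst p + snd p *s w, snd p)"

lemma keyid:
  "(\<Sum>a\<in>S. (c a :: int) *s (f a - w)) + (\<Sum>a\<in>S. c a) *s w = (\<Sum>a\<in>S. c a *s f a)"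
  by (simp add: vec_eq_iff sum_distrib_right sum_distrib_left sum_subtractf algebra_simps)

lemma cone_sh: "p \<in> cone_at A w \<longleftrightarrow> sh w p \<in> cone_at A 0"
proof
  assume "p \<in> cone_at A w"
  then obtain c where p: "p = ((\<Sum>a\<in>A. int (c a) *s (a - w)), (\<Sum>a\<in>A. int (c a)))"
    unfolding cone_at_def by blast
  have "sh w p = ((\<Sum>a\<in>A. int (c a) *s (a - 0)), (\<Sum>a\<in>A. int (c a)))"
    using keyid[of "\<lambda>a. int (c a)" "\<lambda>a. a" w A] by (simp add: p sh_def)
  then show "sh w p \<in> cone_at A 0" unfolding cone_at_def by blast
next
  assume "sh w p \<in> cone_at A 0"
  then obtain c where p: "sh w p = ((\<Sum>a\<in>A. int (c a) *s (a - 0)), (\<Sum>a\<in>A. int (c a)))"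
    unfolding cone_at_def by blast
  have "p = ((\<Sum>a\<in>A. int (c a) *s (a - w)), (\<Sum>a\<in>A. int (c a)))"
  proof -
    have 1: "fst p + snd p *s w = (\<Sum>a\<in>A. int (c a) *s a)" "snd p = (\<Sum>a\<in>A. int (c a))"
      using p by (auto simp: sh_def)
    have "fst p = (\<Sum>a\<in>A. int (c a) *s (a - w))"
      using keyid[of "\<lambda>a. int (c a)" "\<lambda>a. a" w A] 1 by (metis add_right_cancel)
    then show ?thesis using 1 by (simp add: prod_eq_iff)
  qed
  then show "p \<in> cone_at A w" unfolding cone_at_def by blast
qed

lemma lat_sh: "p \<in> lat v I w \<longleftrightarrow> sh w p \<in> lat v I 0"
proof
  assume "p \<in> lat v I w"
  then obtain c where p: "p = ((\<Sum>j\<in>I. c j *s (v j - w)), (\<Sum>j\<in>I. c j))"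
    unfolding lat_def by blast
  have "sh w p = ((\<Sum>j\<in>I. c j *s (v j - 0)), (\<Sum>j\<in>I. c j))"
    using keyid[of c v w I] by (simp add: p sh_def)
  then show "sh w p \<in> lat v I 0" unfolding lat_def by blast
next
  assume "sh w p \<in> lat v I 0"
  then obtain c where p: "sh w p = ((\<Sum>j\<in>I. c j *s (v j - 0)), (\<Sum>j\<in>I. c j))"
    unfolding lat_def by blast
  have "p = ((\<Sum>j\<in>I. c j *s (v j - w)), (\<Sum>j\<in>I. c j))"
  proof -
    have 1: "fst p + snd p *s w = (\<Sum>j\<in>I. c j *s v j)" "snd p = (\<Sum>j\<in>I. c j)"
      using p by (auto simp: sh_def)
    have "fst p = (\<Sum>j\<in>I. c j *s (v j - w))"
      using keyid[of c v w I] 1 by (metis add_right_cancel)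
    then show ?thesis using 1 by (simp add: prod_eq_iff)
  qed
  then show "p \<in> lat v I w" unfolding lat_def by blast
qed

lemma sh_diff: "sh w (p - q) = sh w p - sh w q"
  by (simp add: sh_def vec_eq_iff algebra_simps)

lemma lat_add: "x \<in> lat v I w \<Longrightarrow> y \<in> lat v I w \<Longrightarrow> x + y \<in> lat v I w"
proof -
  assume "x \<in> lat v I w" "y \<in> lat v I w"
  then obtain c d where x: "x = ((\<Sum>j\<in>I. c j *s (v j - w)), (\<Sum>j\<in>I. c j))"
    and y: "y = ((\<Sum>j\<in>I. d j *s (v j - w)), (\<Sum>j\<in>I. d j))"
    unfolding lat_def by blast
  have "x + y = ((\<Sum>j\<in>I. (c j + d j) *s (v j - w)), (\<Sum>j\<in>I. c j + d j))"
    by (simp add: x y vec_eq_iff sum.distrib[symmetric] algebra_simps)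
  then show ?thesis unfolding lat_def by (intro CollectI exI[of _ "\<lambda>j. c j + d j"]) simp
qed

lemma lat_neg: "x \<in> lat v I w \<Longrightarrow> - x \<in> lat v I w"
proof -
  assume "x \<in> lat v I w"
  then obtain c where x: "x = ((\<Sum>j\<in>I. c j *s (v j - w)), (\<Sum>j\<in>I. c j))"
    unfolding lat_def by blast
  have "- x = ((\<Sum>j\<in>I. (- c j) *s (v j - w)), (\<Sum>j\<in>I. - c j))"
    by (simp add: x vec_eq_iff sum_negf[symmetric] algebra_simps)
  then show ?thesis unfolding lat_def by (intro CollectI exI[of _ "\<lambda>j. - c j"]) simp
qed

lemma lat_diff_iff: "e \<in> lat v I w \<Longrightarrow> (x - e \<in> lat v I w \<longleftrightarrow> x \<in> lat v I w)"
  using lat_add[of "x - e" v I w e] lat_add[of x v I w "- e"] lat_neg[of e v I w] by auto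

theorem lemma4p2:
  fixes A :: "(int ^ 'd) set"
    and v :: "nat \<Rightarrow> int ^ 'd"
    and \<pi> :: "(int ^ 'd) \<times> int"
    and gH :: "nat \<Rightarrow> (int ^ 'd) \<times> int"
    and n i :: nat
  assumes finA: "finite A"
    and vinj: "inj_on v {1..CARD('d) + 1}"
    and vindep: "\<not> affine_dependent (rvec ` v ` {1..CARD('d) + 1})"
    and hull: "convex hull (rvec ` A) = convex hull (rvec ` v ` {1..CARD('d) + 1})"
    and vlast: "v (CARD('d) + 1) = 0"
    and enum: "bij_betw gH {1..n}
      (minimal_elems (cong_set (cone_at A 0) (lat v {1..CARD('d) + 1} 0) \<pi>)
         (cone_at A 0) v {1..CARD('d) + 1} 0)"
    and i: "1 \<le> i" "i \<le> CARD('d)"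
  shows "bij_betw (\<lambda>k. (fst (gH k) - snd (gH k) *s v i, snd (gH k))) {1..n}
      (minimal_elems (cong_set (cone_at A (v i)) (lat v {1..CARD('d) + 1} (v i)) (\<pi> - (v i, 1)))
         (cone_at A (v i)) v {1..CARD('d) + 1} (v i))"
proof -
  define D where "D = CARD('d)"
  define I where "I = {1..D + 1}"
  define T where "T = (\<lambda>p::(int ^ 'd) \<times> int. (fst p - snd p *s v i, snd p))"
  define M where "M = minimal_elems (cong_set (cone_at A 0) (lat v I 0) \<pi>) (cone_at A 0) v I 0"
  define M' where "M' = minimal_elems (cong_set (cone_at A (v i)) (lat v I (v i)) (\<pi> - (v i, 1)))
         (cone_at A (v i)) v I (v i)"
  have shT: "sh (v i) (T p) = p" for p by (simp add: sh_def T_def)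
  have Tsh: "T (sh (v i) p) = p" for p by (simp add: sh_def T_def)
  have iD: "i \<noteq> D + 1" "i \<in> I" "D + 1 \<in> I" using i by (auto simp: D_def I_def)
  define e where "e = ((snd \<pi> - 2) *s v i, - 1 :: int)"
  have eL: "e \<in> lat v I 0"
  proof -
    define c where "c = (\<lambda>j. (if j = i then snd \<pi> - 2 else 0) + (if j = D + 1 then - (snd \<pi> - 1) else 0))"
    have "(\<Sum>j\<in>I. c j *s (v j - 0)) = (\<Sum>j\<in>I. (if j = i then (snd \<pi> - 2) *s v j else 0)
         + (if j = D + 1 then (- (snd \<pi> - 1)) *s v j else 0))"
      by (rule sum.cong) (auto simp: c_def vector_sadd_rdistrib)
    also have "\<dots> = (snd \<pi> - 2) *s v i"
      using iD vlast by (simp add: sum.distrib D_def I_def)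
    finally have 1: "(\<Sum>j\<in>I. c j *s (v j - 0)) = (snd \<pi> - 2) *s v i" .
    have 2: "(\<Sum>j\<in>I. c j) = -1" using iD by (simp add: c_def sum.distrib I_def)
    show ?thesis unfolding lat_def e_def using 1 2 by (intro CollectI exI[of _ c]) simp
  qed
  have she: "sh (v i) (\<pi> - (v i, 1)) = \<pi> + e"
    by (cases \<pi>) (simp add: sh_def e_def vec_eq_iff algebra_simps)
  have shvj: "sh (v i) (v j - v i, 1) = (v j, 1)" for j
    by (simp add: sh_def)
  have memb: "q \<in> M' \<longleftrightarrow> sh (v i) q \<in> M" for q
  proof -
    have a: "q \<in> cone_at A (v i) \<longleftrightarrow> sh (v i) q \<in> cone_at A 0" by (rule cone_sh)
    have b: "q - (\<pi> - (v i, 1)) \<in> lat v I (v i) \<longleftrightarrow> sh (v i) q - \<pi> \<in> lat v I 0"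
    proof -
      have "q - (\<pi> - (v i, 1)) \<in> lat v I (v i) \<longleftrightarrow> sh (v i) q - (\<pi> + e) \<in> lat v I 0"
        using lat_sh[of "q - (\<pi> - (v i, 1))" v I "v i"] by (simp only: sh_diff[of "v i" q "\<pi> - (v i, 1)"] she)
      also have "sh (v i) q - (\<pi> + e) = (sh (v i) q - \<pi>) - e" by simp
      finally show ?thesis using lat_diff_iff[OF eL, of "sh (v i) q - \<pi>"] by simp
    qed
    have c: "q - (v j - v i, 1) \<in> cone_at A (v i) \<longleftrightarrow> sh (v i) q - (v j - 0, 1) \<in> cone_at A 0" for j
      by (simp add: cone_sh[of "q - (v j - v i, 1)"] sh_diff shvj)
    show ?thesis unfolding M_def M'_def minimal_elems_def cong_set_def using a b c by auto
  qed
  have bT: "bij_betw T M M'"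
  proof (rule bij_betw_byWitness[where f' = "sh (v i)"])
    show "\<forall>a\<in>M. sh (v i) (T a) = a" using shT by simp
    show "\<forall>a'\<in>M'. T (sh (v i) a') = a'" using Tsh by simp
    show "T ` M \<subseteq> M'" using memb shT by (metis image_subsetI)
    show "sh (v i) ` M' \<subseteq> M" using memb by auto
  qed
  have "bij_betw (T \<circ> gH) {1..n} M'"
    by (rule bij_betw_trans[OF _ bT]) (use enum in \<open>simp add: M_def I_def D_def\<close>)
  then show ?thesis by (simp add: T_def M'_def I_def D_def comp_def)
qed

end
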